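(* Let $E$ be an elliptic curve, let $V$ be an algebraic subvariety of $E^n$ and let $\phi:E^n\to E^n$ be an isogeny. Then: (i) $\mathrm{Stab}\,\phi^{-1}(V)=\phi^{-1}(\mathrm{Stab}\,V)$; (ii) if $\hat\phi:E^n\to E^n$ is an isogeny and $a\in\mathrm{End}(E)$ is such that $\hat\phi\phi=\phi\hat\phi=[a]$, then $$\left|\mathrm{Stab}\,\hat\phi^{-1}(V)\cap\ker[a]\right|=|\ker\hat\phi|\cdot\left|\mathrm{Stab}\,V\cap\ker\phi\right|.$$
   Context: For a subvariety $X\subseteq E^n$, $\mathrm{Stab}\,X=\{t\in E^n : X+t\subseteq X\}$. $[a]$ denotes multiplication by $a$ on $E^n$, and $|S|$ denotes the cardinality of a finite set $S$. *)

theory Defs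
  imports "HOL-Analysis.Analysis"
begin

text \<open>Abstract model: the elliptic curve E is modelled by its (divisible) abelian group of
points, a type 'a of class ab_group_add; E^n is "'a ^ 'n" with 'n a finite index type.\<close>

definition Stab :: "('a::ab_group_add) set \<Rightarrow> 'a set" where
  "Stab X = {t. (\<lambda>x. x + t) ` X \<subseteq> X}"

definition additive_map :: "('a::ab_group_add \<Rightarrow> 'b::ab_group_add) \<Rightarrow> bool" where
  "additive_map f \<longleftrightarrow> (\<forall>x y. f (x + y) = f x + f y)"

definition ker :: "('a \<Rightarrow> 'b::zero) \<Rightarrow> 'a set" where
  "ker f = {x. f x = 0}"

definition isogeny :: "('a::ab_group_add \<Rightarrow> 'b::ab_group_add) \<Rightarrow> bool" where
  "isogeny f \<longleftrightarrow> additive_map f \<and> surj f \<and> finite (ker f)"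

definition End :: "('a::ab_group_add \<Rightarrow> 'a) set" where
  "End = {a. additive_map a}"

definition mult_end :: "('a \<Rightarrow> 'a) \<Rightarrow> 'a ^ 'n \<Rightarrow> 'a ^ 'n" where
  "mult_end a x = (\<chi> i. a (x $ i))"

end

theory Submission
  imports Defs
begin

lemma add_zero_map: "additive_map f \<Longrightarrow> f 0 = (0::'b::ab_group_add)"
  unfolding additive_map_def by (metis add_cancel_right_right add_0)

lemma add_minus_map: "additive_map f \<Longrightarrow> f (x - y) = f x - (f y::'b::ab_group_add)"
  unfolding additive_map_def by (metis add_diff_cancel diff_add_cancel eq_diff_eq)

lemma stab_pre:
  assumes "isogeny f"
  shows "Stab (f -` V) = f -` (Stab V)"
proof -
  have add: "\<And>x y. f (x + y) = f x + f y" and s: "surj f"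
    using assms unfolding isogeny_def additive_map_def by auto
  show ?thesis
  proof (rule set_eqI)
    fix t
    show "t \<in> Stab (f -` V) \<longleftrightarrow> t \<in> f -` Stab V"
    proof
      assume h0: "t \<in> Stab (f -` V)"
      hence h: "\<And>x. f x \<in> V \<Longrightarrow> f (x + t) \<in> V" unfolding Stab_def by blast
      have "\<And>y. y \<in> V \<Longrightarrow> y + f t \<in> V"
      proof -
        fix y assume y: "y \<in> V"
        obtain x where "y = f x" using s by (metis surjD)
        thus "y + f t \<in> V" using h[of x] y by (simp add: add)
      qed
      thus "t \<in> f -` Stab V" unfolding Stab_def by blast
    next
      assume "t \<in> f -` Stab V"
      hence h: "\<And>y. y \<in> V \<Longrightarrow> y + f t \<in> V" unfolding Stab_def by blast
      show "t \<in> Stab (f -` V)" unfolding Stab_def using h by (auto simp: add)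
    qed
  qed
qed

lemma fibre_card:
  assumes "isogeny f"
  shows "card (f -` {s}) = card (ker f)"
proof -
  have add: "additive_map f" and s: "surj f"
    using assms unfolding isogeny_def by auto
  obtain x0 where x0: "f x0 = s" using s by (metis surjD)
  have "f -` {s} = (\<lambda>k. k + x0) ` ker f"
  proof (auto simp: ker_def)
    fix x assume "s = f x"
    hence "f (x - x0) = 0" using x0 add_minus_map[OF add] by simp
    thus "x \<in> (\<lambda>k. k + x0) ` {x. f x = 0}"
      by (intro image_eqI[of _ _ "x - x0"]) auto
  next
    fix k assume "f k = 0"
    thus "f (k + x0) = s" using add x0 unfolding additive_map_def by simp
  qed
  moreover have "inj (\<lambda>k. k + x0)" by (auto intro: injI)
  ultimately show ?thesis by (simp add: card_image inj_on_subset)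
qed

lemma card_pre:
  assumes iso: "isogeny f" and fin: "finite S"
  shows "card (f -` S) = card (ker f) * card S"
proof -
  have fk: "finite (ker f)" and add: "additive_map f" using iso unfolding isogeny_def by auto
  have z: "0 \<in> ker f" unfolding ker_def using add_zero_map[OF add] by simp
  have fib: "finite (f -` {s})" for s
  proof -
    have c: "card (f -` {s}) = card (ker f)" by (rule fibre_card[OF iso])
    have "card (ker f) \<noteq> 0" using fk z by auto
    hence "card (f -` {s}) \<noteq> 0" using c by simp
    thus ?thesis by (meson card.infinite)
  qed
  have eq: "f -` S = (\<Union>s\<in>S. f -` {s})" by auto
  have "card (\<Union>s\<in>S. f -` {s}) = (\<Sum>s\<in>S. card (f -` {s}))"
    by (rule card_UN_disjoint[OF fin]) (use fib in blast)+
  also have "\<dots> = (\<Sum>s\<in>S. card (ker f))" using fibre_card[OF iso] by (intro sum.cong) auto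
  also have "\<dots> = card (ker f) * card S" by simp
  finally show ?thesis using eq by simp
qed

theorem lemma3p2:
  fixes V :: "('a::ab_group_add ^ 'n) set"
    and \<phi> :: "'a ^ 'n \<Rightarrow> 'a ^ 'n"
  assumes "isogeny \<phi>"
  shows "Stab (\<phi> -` V) = \<phi> -` (Stab V) \<and>
    (\<forall>(\<psi> :: 'a ^ 'n \<Rightarrow> 'a ^ 'n) (a :: 'a \<Rightarrow> 'a).
       isogeny \<psi> \<and> a \<in> End \<and> \<psi> \<circ> \<phi> = mult_end a \<and> \<phi> \<circ> \<psi> = mult_end a \<longrightarrow>
       card (Stab (\<psi> -` V) \<inter> ker (mult_end a)) = card (ker \<psi>) * card (Stab V \<inter> ker \<phi>))"
proof (intro conjI allI impI)
  show "Stab (\<phi> -` V) = \<phi> -` (Stab V)" using stab_pre[OF assms] .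
next
  fix \<psi> :: "'a ^ 'n \<Rightarrow> 'a ^ 'n" and a :: "'a \<Rightarrow> 'a"
  assume h: "isogeny \<psi> \<and> a \<in> End \<and> \<psi> \<circ> \<phi> = mult_end a \<and> \<phi> \<circ> \<psi> = mult_end a"
  have k: "ker (mult_end a) = \<psi> -` ker \<phi>"
    using h[THEN conjunct2, THEN conjunct2, THEN conjunct2, symmetric]
    by (auto simp: ker_def)
  have "Stab (\<psi> -` V) \<inter> ker (mult_end a) = \<psi> -` (Stab V \<inter> ker \<phi>)"
    using stab_pre[of \<psi> V] h k by (simp add: vimage_Int)
  moreover have "finite (Stab V \<inter> ker \<phi>)" using assms unfolding isogeny_def by auto
  ultimately show "card (Stab (\<psi> -` V) \<inter> ker (mult_end a)) = card (ker \<psi>) * card (Stab V \<inter> ker \<phi>)"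
    using card_pre[of \<psi> "Stab V \<inter> ker \<phi>"] h by simp
qed

end
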